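(* Let $(n_k)_{k\geq1}$ be a strictly increasing sequence of positive integers, $K\geq2$, $s>1$, $\alpha\in(0,1)$, and let $$m_k=\left\lceil\frac{n_k}{\theta}\ln\left(\frac{\zeta(s)\,n_k^{s+1}}{\alpha}\right)\right\rceil,\qquad k=1,\ldots,K.$$ Let $B_2,\ldots,B_K$ be mutually independent random variables with $B_k\sim\mathrm{Bin}\left(m_k,\frac{n_k-n_{k-1}}{n_k}\right)$ (number of trials $m_k$, success probability $\frac{n_k-n_{k-1}}{n_k}$), and let $U_K=\sum_{k=2}^KB_k$. Then $$\mathrm{Var}(U_K)<\mathbb{E}(U_K)\leq m_K+n_K-m_1.$$
   Context: $\zeta$ denotes the Riemann zeta function and $\theta=\frac{3\ln(3/2)-1}{2}\approx0.108$. *)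

theory Defs
  imports "HOL-Probability.Probability"
begin

definition zeta_real :: "real \<Rightarrow> real" where
  "zeta_real s = (\<Sum>j. 1 / (real (Suc j)) powr s)"

definition theta :: real where
  "theta = (3 * ln (3/2) - 1) / 2"

text \<open>m_k = ceiling((n_k / theta) * ln(zeta(s) n_k^(s+1) / alpha)); this is positive, so nat is harmless.\<close>
definition m_seq :: "(nat \<Rightarrow> nat) \<Rightarrow> real \<Rightarrow> real \<Rightarrow> nat \<Rightarrow> nat" where
  "m_seq n s \<alpha> k =
     nat \<lceil>(real (n k) / theta) * ln (zeta_real s * real (n k) powr (s + 1) / \<alpha>)\<rceil>"

end

theory Submission
  imports Defs
begin

lemma binom_sum1:
  fixes p :: real
  shows "(\<Sum>k\<le>n. real (n choose k) * p^k * (1-p)^(n-k)) = 1"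
  using binomial_ring[of p "1-p" n] by (simp add: atLeast0AtMost)

lemma binom_mean:
  fixes p :: real
  shows "(\<Sum>k\<le>n. real (n choose k) * p^k * (1-p)^(n-k) * real k) = real n * p"
proof (cases n)
  case 0 then show ?thesis by simp
next
  case (Suc m)
  have "(\<Sum>k\<le>Suc m. real (Suc m choose k) * p^k * (1-p)^(Suc m-k) * real k)
      = (\<Sum>k\<le>m. real (Suc m choose Suc k) * p^Suc k * (1-p)^(Suc m-Suc k) * real (Suc k))"
    by (subst sum.atMost_Suc_shift) simp
  also have "\<dots> = (\<Sum>k\<le>m. real (Suc m) * p * (real (m choose k) * p^k * (1-p)^(m-k)))"
  proof (rule sum.cong[OF refl])
    fix k assume "k \<in> {..m}"
    have "real (Suc m choose Suc k) * real (Suc k) = real (Suc m) * real (m choose k)"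
      using Suc_times_binomial[of k m] by (metis mult.commute of_nat_mult)
    then show "real (Suc m choose Suc k) * p^Suc k * (1-p)^(Suc m-Suc k) * real (Suc k)
       = real (Suc m) * p * (real (m choose k) * p^k * (1-p)^(m-k))"
    proof -
      have "real (Suc m choose Suc k) * p^Suc k * (1-p)^(Suc m-Suc k) * real (Suc k)
         = (real (Suc m choose Suc k) * real (Suc k)) * (p * (p^k * (1-p)^(m-k)))"
        by (simp add: ac_simps)
      also have "\<dots> = real (Suc m) * real (m choose k) * (p * (p^k * (1-p)^(m-k)))"
        by (simp only: \<open>real (Suc m choose Suc k) * real (Suc k) = real (Suc m) * real (m choose k)\<close>)
      finally show ?thesis by (simp add: ac_simps)
    qed
  qed
  also have "\<dots> = real (Suc m) * p" by (simp add: sum_distrib_left[symmetric] binom_sum1)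
  finally show ?thesis using Suc by simp
qed

lemma binom_sq:
  fixes p :: real
  shows "(\<Sum>k\<le>n. real (n choose k) * p^k * (1-p)^(n-k) * (real k)^2) = real n * p * ((real n - 1) * p + 1)"
proof (cases n)
  case 0 then show ?thesis by simp
next
  case (Suc m)
  have "(\<Sum>k\<le>Suc m. real (Suc m choose k) * p^k * (1-p)^(Suc m-k) * (real k)^2)
      = (\<Sum>k\<le>m. real (Suc m choose Suc k) * p^Suc k * (1-p)^(Suc m-Suc k) * (real (Suc k))^2)"
    by (subst sum.atMost_Suc_shift) simp
  also have "\<dots> = (\<Sum>k\<le>m. real (Suc m) * p * (real (m choose k) * p^k * (1-p)^(m-k) * real k
       + real (m choose k) * p^k * (1-p)^(m-k)))"
  proof (rule sum.cong[OF refl])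
    fix k assume "k \<in> {..m}"
    have "real (Suc m choose Suc k) * real (Suc k) = real (Suc m) * real (m choose k)"
      using Suc_times_binomial[of k m] by (metis mult.commute of_nat_mult)
    then show "real (Suc m choose Suc k) * p^Suc k * (1-p)^(Suc m-Suc k) * (real (Suc k))^2
       = real (Suc m) * p * (real (m choose k) * p^k * (1-p)^(m-k) * real k
       + real (m choose k) * p^k * (1-p)^(m-k))"
    proof -
      have "real (Suc m choose Suc k) * p^Suc k * (1-p)^(Suc m-Suc k) * (real (Suc k))^2
         = (real (Suc m choose Suc k) * real (Suc k)) * (p * (p^k * (1-p)^(m-k))) * real (Suc k)"
        by (simp add: ac_simps power2_eq_square)
      also have "\<dots> = real (Suc m) * real (m choose k) * (p * (p^k * (1-p)^(m-k))) * (real k + 1)"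
        by (simp only: \<open>real (Suc m choose Suc k) * real (Suc k) = real (Suc m) * real (m choose k)\<close>) simp
      finally show ?thesis by (simp add: algebra_simps)
    qed
  qed
  also have "\<dots> = real (Suc m) * p * (real m * p + 1)"
    by (simp add: sum_distrib_left[symmetric] sum.distrib binom_sum1 binom_mean)
  finally show ?thesis using Suc by simp
qed

lemma binom_var:
  fixes p :: real
  shows "(\<Sum>k\<le>n. real (n choose k) * p^k * (1-p)^(n-k) * (real k - real n * p)^2) = real n * p * (1 - p)"
proof -
  have "(\<Sum>k\<le>n. real (n choose k) * p^k * (1-p)^(n-k) * (real k - real n * p)^2)
    = (\<Sum>k\<le>n. real (n choose k) * p^k * (1-p)^(n-k) * (real k)^2)
      - 2 * (real n * p) * (\<Sum>k\<le>n. real (n choose k) * p^k * (1-p)^(n-k) * real k)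
      + (real n * p)^2 * (\<Sum>k\<le>n. real (n choose k) * p^k * (1-p)^(n-k))"
    by (simp add: power2_eq_square algebra_simps sum_distrib_left sum.distrib sum_subtractf)
  also have "\<dots> = real n * p * ((real n - 1) * p + 1) - 2 * (real n * p) * (real n * p) + (real n * p)^2 * 1"
    by (simp only: binom_sq binom_mean binom_sum1)
  also have "\<dots> = real n * p * (1 - p)"
    by (simp add: power2_eq_square algebra_simps)
  finally show ?thesis .
qed

lemma telescope_le:
  fixes a g :: "nat \<Rightarrow> real"
  assumes "\<And>k. k \<ge> 1 \<Longrightarrow> g k \<le> g (Suc k)" "\<And>k. k \<ge> 1 \<Longrightarrow> 0 \<le> a k" "K \<ge> 1"
  shows "(\<Sum>k=2..K. (a k - a (k-1)) * g k) \<le> a K * g K - a 1 * g 1"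
  using assms(3)
proof (induction K rule: dec_induct)
  case base then show ?case by simp
next
  case (step K)
  have "(\<Sum>k=2..Suc K. (a k - a (k-1)) * g k) = (\<Sum>k=2..K. (a k - a (k-1)) * g k) + (a (Suc K) - a K) * g (Suc K)"
    using step by (simp add: sum.atLeast_Suc_atMost_Suc_shift)
  also have "\<dots> \<le> a K * g K - a 1 * g 1 + (a (Suc K) - a K) * g (Suc K)" using step by simp
  also have "\<dots> \<le> a (Suc K) * g (Suc K) - a 1 * g 1"
  proof -
    have "a K * g K \<le> a K * g (Suc K)" using assms(1,2) step(1) by (simp add: mult_left_mono)
    then show ?thesis by (simp add: algebra_simps)
  qed
  finally show ?case .
qed

lemma theta_pos: "(3 * ln (3/2) - 1) / 2 > (0::real)"
proof -
  have "ln (3/2) > (1/3::real)"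
  proof (rule ccontr)
    assume "\<not> ?thesis"
    then have "3/2 \<le> exp (1/3::real)" by (metis exp_ln less_eq_real_def linorder_not_le exp_le_cancel_iff zero_less_divide_iff zero_less_numeral)
    then have "(3/2::real)^3 \<le> exp (1/3::real) ^ 3" by (rule power_mono) simp
    also have "exp (1/3::real) ^ 3 = exp 1" by (simp add: exp_of_nat_mult[symmetric])
    finally have "27/8 \<le> exp (1::real)" by (simp add: power3_eq_cube)
    then show False using e_less_272 by simp
  qed
  then show ?thesis by simp
qed

lemma zeta_ge1: "s > 1 \<Longrightarrow> (\<Sum>j. 1 / (real (Suc j)) powr s) \<ge> 1"
proof -
  assume s: "s > 1"
  have "summable (\<lambda>j. real j powr (-s))" using s by (simp add: summable_real_powr_iff)
  then have "summable (\<lambda>j. real (Suc j) powr (-s))" by (subst summable_Suc_iff)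
  then have sm: "summable (\<lambda>j. 1 / (real (Suc j)) powr s)" by (simp add: powr_minus_divide)
  have "(\<Sum>j<1. 1 / (real (Suc j)) powr s) \<le> (\<Sum>j. 1 / (real (Suc j)) powr s)"
    by (rule sum_le_suminf[OF sm]) auto
  then show ?thesis by simp
qed


theorem lemma4:
  fixes n :: "nat \<Rightarrow> nat" and K :: nat and s \<alpha> :: real
    and M :: "'a measure" and B :: "nat \<Rightarrow> 'a \<Rightarrow> nat"
  assumes n_pos: "\<forall>k\<ge>1. 0 < n k"
    and n_incr: "\<forall>k\<ge>1. n k < n (Suc k)"
    and K: "K \<ge> 2" and s: "s > 1" and \<alpha>: "0 < \<alpha>" "\<alpha> < 1"
    and M: "prob_space M"
    and indep: "prob_space.indep_vars M (\<lambda>_. count_space UNIV) B {2..K}"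
    and distr: "\<forall>k\<in>{2..K}. distr M (count_space UNIV) (B k) =
        measure_pmf (binomial_pmf (m_seq n s \<alpha> k) ((real (n k) - real (n (k - 1))) / real (n k)))"
  defines "U \<equiv> (\<lambda>\<omega>. real (\<Sum>k=2..K. B k \<omega>))"
  shows "(LINT \<omega>|M. (U \<omega> - (LINT \<omega>'|M. U \<omega>'))\<^sup>2) < (LINT \<omega>|M. U \<omega>)
       \<and> (LINT \<omega>|M. U \<omega>) \<le> real (m_seq n s \<alpha> K) + real (n K) - real (m_seq n s \<alpha> 1)"
proof -
  interpret P: prob_space M by (rule M)
  have th: "theta > 0" using theta_pos unfolding theta_def .
  define z where "z = zeta_real s"
  have z: "z \<ge> 1" using zeta_ge1[OF s] unfolding z_def zeta_real_def .
  define g where "g k = ln (z * real (n k) powr (s+1) / \<alpha>) / theta" for k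
  define F where "F k = (real (n k) / theta) * ln (z * real (n k) powr (s + 1) / \<alpha>)" for k
  define m where "m k = m_seq n s \<alpha> k" for k
  have F_g: "F k = real (n k) * g k" for k by (simp add: F_def g_def)
  have m_eq: "m k = nat \<lceil>F k\<rceil>" for k by (simp add: m_def m_seq_def F_def z_def)
  have g_pos: "g k > 0" if "k \<ge> 1" for k
  proof -
    have "real (n k) \<ge> 1" using n_pos that by (simp add: Suc_le_eq)
    then have "real (n k) powr (s+1) \<ge> 1" using s by (simp add: ge_one_powr_ge_zero)
    then have "z * real (n k) powr (s+1) \<ge> 1" using z by (metis mult_mono' mult_1 zero_le_one)
    then have "z * real (n k) powr (s+1) / \<alpha> > 1" using \<alpha> by (simp add: less_divide_eq)
    then show ?thesis unfolding g_def using th by simp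
  qed
  have F_pos: "F k > 0" if "k \<ge> 1" for k
    using g_pos[OF that] n_pos that by (simp add: F_g)
  have mF: "F k \<le> real (m k) \<and> real (m k) < F k + 1" if "k \<ge> 1" for k
  proof -
    have "real (m k) = of_int \<lceil>F k\<rceil>" using F_pos[OF that] by (simp add: m_eq)
    then show ?thesis using ceiling_correct[of "F k"] by linarith
  qed
  have g_mono: "g k \<le> g (Suc k)" if "k \<ge> 1" for k
  proof -
    have nk: "real (n k) \<ge> 1" using n_pos that by (simp add: Suc_le_eq)
    have "n k \<le> n (Suc k)" using n_incr that by (simp add: less_imp_le)
    then have "real (n k) powr (s+1) \<le> real (n (Suc k)) powr (s+1)"
      using s nk by (intro powr_mono2) auto
    then have "z * real (n k) powr (s+1) / \<alpha> \<le> z * real (n (Suc k)) powr (s+1) / \<alpha>"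
      using z \<alpha> by (intro divide_right_mono mult_left_mono) auto
    moreover have "z * real (n k) powr (s+1) / \<alpha> > 0" using z \<alpha> nk by simp
    ultimately show ?thesis unfolding g_def using th by (simp add: divide_right_mono)
  qed
  define p where "p k = (real (n k) - real (n (k - 1))) / real (n k)" for k
  define \<mu> where "\<mu> k = real (m k) * p k" for k
  have nlt: "n (k-1) < n k" "0 < n (k-1)" if "k \<in> {2..K}" for k
    using n_incr[rule_format, of "k-1"] n_pos[rule_format, of "k-1"] that
    by (auto simp: Suc_diff_1)
  have p01: "0 < p k \<and> p k < 1" if "k \<in> {2..K}" for k
    using nlt[OF that] by (auto simp: p_def divide_simps)
  have m_pos: "real (m k) > 0" if "k \<ge> 1" for k using mF[OF that] F_pos[OF that] by linarith

  have rv: "B k \<in> measurable M (count_space UNIV)" if "k \<in> {2..K}" for k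
    using indep that unfolding P.indep_vars_def by auto
  have dk: "distr M (count_space UNIV) (B k) = measure_pmf (binomial_pmf (m k) (p k))" if "k \<in> {2..K}" for k
    using distr that by (simp add: m_def p_def)
  have pin: "p k \<in> {0..1}" if "k \<in> {2..K}" for k using p01[OF that] by auto
  have int_gen: "integrable M (\<lambda>\<omega>. f (B k \<omega>))" if "k \<in> {2..K}" for k and f :: "nat \<Rightarrow> real"
  proof -
    have "integrable (distr M (count_space UNIV) (B k)) f"
      using dk[OF that] pin[OF that] by simp
    then show ?thesis using integrable_distr_eq[OF rv[OF that], of f] by simp
  qed
  have int_gen_eq: "(LINT \<omega>|M. f (B k \<omega>)) = (\<Sum>j\<le>m k. real (m k choose j) * p k ^ j * (1 - p k) ^ (m k - j) * f j)"
    if "k \<in> {2..K}" for k and f :: "nat \<Rightarrow> real"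
  proof -
    have "(LINT \<omega>|M. f (B k \<omega>)) = integral\<^sup>L (distr M (count_space UNIV) (B k)) f"
      using integral_distr[OF rv[OF that], of f] by simp
    also have "\<dots> = measure_pmf.expectation (binomial_pmf (m k) (p k)) f" using dk[OF that] by simp
    also have "\<dots> = (\<Sum>j\<le>m k. real (m k choose j) * p k ^ j * (1 - p k) ^ (m k - j) * f j)"
      using pin[OF that] by (simp add: expectation_binomial_pmf')
    finally show ?thesis .
  qed
  have mean: "(LINT \<omega>|M. real (B k \<omega>)) = \<mu> k" if "k \<in> {2..K}" for k
    using int_gen_eq[OF that, of real] by (simp add: binom_mean \<mu>_def)
  have var: "(LINT \<omega>|M. (real (B k \<omega>) - \<mu> k)^2) = real (m k) * p k * (1 - p k)" if "k \<in> {2..K}" for k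
    using int_gen_eq[OF that, of "\<lambda>j. (real j - \<mu> k)^2"] by (simp add: binom_var \<mu>_def)
  define Y where "Y k \<omega> = real (B k \<omega>) - \<mu> k" for k \<omega>
  have intY: "integrable M (Y k)" if "k \<in> {2..K}" for k
    using int_gen[OF that, of "\<lambda>j. real j - \<mu> k"] by (simp add: Y_def[abs_def])
  have EY: "(LINT \<omega>|M. Y k \<omega>) = 0" if "k \<in> {2..K}" for k
  proof -
    have "(LINT \<omega>|M. Y k \<omega>) = (LINT \<omega>|M. real (B k \<omega>)) - (LINT \<omega>|M. \<mu> k)"
      unfolding Y_def using int_gen[OF that, of real] by (subst Bochner_Integration.integral_diff) auto
    then show ?thesis using mean[OF that] P.prob_space by simp
  qed
  have indY: "P.indep_vars (\<lambda>_. borel) Y {2..K}"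
    unfolding Y_def by (rule P.indep_vars_compose2[OF indep]) simp
  have EU: "(LINT \<omega>|M. U \<omega>) = (\<Sum>k=2..K. \<mu> k)"
  proof -
    have "(LINT \<omega>|M. U \<omega>) = (LINT \<omega>|M. (\<Sum>k=2..K. real (B k \<omega>)))" unfolding U_def by simp
    also have "\<dots> = (\<Sum>k=2..K. LINT \<omega>|M. real (B k \<omega>))"
      by (rule Bochner_Integration.integral_sum) (use int_gen in auto)
    also have "\<dots> = (\<Sum>k=2..K. \<mu> k)" using mean by simp
    finally show ?thesis .
  qed
  have UY: "U \<omega> - (LINT \<omega>'|M. U \<omega>') = (\<Sum>k=2..K. Y k \<omega>)" for \<omega>
  proof -
    have "U \<omega> - (LINT \<omega>'|M. U \<omega>') = U \<omega> - (\<Sum>k=2..K. \<mu> k)" by (simp only: EU)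
    then show ?thesis unfolding U_def Y_def by (simp add: sum_subtractf)
  qed
  have cross: "(LINT \<omega>|M. Y i \<omega> * Y j \<omega>) = (if i = j then real (m i) * p i * (1 - p i) else 0)
      \<and> integrable M (\<lambda>\<omega>. Y i \<omega> * Y j \<omega>)"
    if "i \<in> {2..K}" "j \<in> {2..K}" for i j
  proof (cases "i = j")
    case True
    have "integrable M (\<lambda>\<omega>. Y i \<omega> * Y i \<omega>)"
      using int_gen[OF that(1), of "\<lambda>j. (real j - \<mu> i)^2"] by (simp add: Y_def power2_eq_square)
    then show ?thesis using True var[OF that(1)] by (simp add: Y_def power2_eq_square)
  next
    case False
    have ind2: "P.indep_vars (\<lambda>_. borel) Y {i, j}"
      by (rule P.indep_vars_subset[OF indY]) (use that in auto)
    have pr: "(\<Prod>l\<in>{i,j}. Y l \<omega>) = Y i \<omega> * Y j \<omega>" for \<omega> using False by simp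
    have "(LINT \<omega>|M. (\<Prod>l\<in>{i,j}. Y l \<omega>)) = (\<Prod>l\<in>{i,j}. LINT \<omega>|M. Y l \<omega>)"
      by (rule P.indep_vars_lebesgue_integral[OF _ ind2]) (use intY that in auto)
    moreover have "integrable M (\<lambda>\<omega>. (\<Prod>l\<in>{i,j}. Y l \<omega>))"
      by (rule P.indep_vars_integrable[OF _ ind2]) (use intY that in auto)
    ultimately show ?thesis using False EY[OF that(1)] by (simp add: pr)
  qed
  have VU: "(LINT \<omega>|M. (U \<omega> - (LINT \<omega>'|M. U \<omega>'))\<^sup>2) = (\<Sum>k=2..K. real (m k) * p k * (1 - p k))"
  proof -
    have "(LINT \<omega>|M. (U \<omega> - (LINT \<omega>'|M. U \<omega>'))\<^sup>2)
        = (LINT \<omega>|M. (\<Sum>i=2..K. \<Sum>j=2..K. Y i \<omega> * Y j \<omega>))"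
      unfolding UY by (simp add: power2_eq_square sum_product)
    also have "\<dots> = (\<Sum>i=2..K. \<Sum>j=2..K. LINT \<omega>|M. Y i \<omega> * Y j \<omega>)"
      using cross
      by (subst Bochner_Integration.integral_sum, fastforce intro!: Bochner_Integration.integrable_sum)
         (auto intro!: sum.cong Bochner_Integration.integral_sum)
    also have "\<dots> = (\<Sum>i=2..K. \<Sum>j=2..K. (if i = j then real (m i) * p i * (1 - p i) else 0))"
      using cross by (intro sum.cong refl) auto
    also have "\<dots> = (\<Sum>k=2..K. real (m k) * p k * (1 - p k))"
      by (simp add: sum.delta)
    finally show ?thesis .
  qed
  have part1: "(\<Sum>k=2..K. real (m k) * p k * (1 - p k)) < (\<Sum>k=2..K. \<mu> k)"
  proof (rule sum_strict_mono)
    show "{2..K} \<noteq> {}" using K by simp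
    fix k assume k: "k \<in> {2..K}"
    have "real (m k) * p k > 0" using m_pos[of k] p01[OF k] k by simp
    then show "real (m k) * p k * (1 - p k) < \<mu> k"
      using p01[OF k] unfolding \<mu>_def by (simp add: algebra_simps)
  qed simp
  have part2: "(\<Sum>k=2..K. \<mu> k) \<le> real (m K) + real (n K) - real (m 1)"
  proof -
    have "\<mu> k \<le> (real (n k) - real (n (k-1))) * g k + (real (n k) - real (n (k-1))) * 1"
      if k: "k \<in> {2..K}" for k
    proof -
      have nk: "real (n k) > 0" "real (n k) > real (n (k-1))" using nlt[OF k] by auto
      have "\<mu> k \<le> (F k + 1) * p k" unfolding \<mu>_def
        using mF[of k] k p01[OF k] by (intro mult_right_mono) auto
      also have "\<dots> = (real (n k) - real (n (k-1))) * g k + p k"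
        using nk by (simp add: F_g p_def field_simps)
      also have "p k \<le> (real (n k) - real (n (k-1))) * 1"
      proof -
        have "real (n k) \<ge> 1" using nlt[OF k] by linarith
        then show ?thesis unfolding p_def using nk by (simp add: divide_le_eq mult_le_cancel_left1 less_imp_le)
      qed
      finally show ?thesis by simp
    qed
    then have "(\<Sum>k=2..K. \<mu> k) \<le> (\<Sum>k=2..K. (real (n k) - real (n (k-1))) * g k)
        + (\<Sum>k=2..K. (real (n k) - real (n (k-1))) * 1)"
      unfolding sum.distrib[symmetric] by (rule sum_mono) blast
    also have "\<dots> \<le> (real (n K) * g K - real (n 1) * g 1) + (real (n K) * 1 - real (n 1) * 1)"
      using K g_mono
      by (intro add_mono telescope_le[where a="\<lambda>k. real (n k)"]) auto
    also have "\<dots> \<le> real (m K) + real (n K) - real (m 1)"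
    proof -
      have "real (n 1) \<ge> 1" using n_pos by (simp add: Suc_le_eq)
      then show ?thesis using mF[of K] mF[of 1] K by (simp add: F_g)
    qed
    finally show ?thesis .
  qed
  show ?thesis using VU EU part1 part2 by (simp add: m_def)
qed

end
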